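(* Let $X$ be a random variable taking values in $\mathbb{C}$, and let $\mathbf{S}\in\mathbb{C}^{n\times n}$ have Jordan decomposition $\mathbf{S}=\mathbf{P}\,\mathrm{blkdiag}(\mathbf{J}_i)_{i=1}^{k}\,\mathbf{P}^{-1}$, where $\mathbf{P}$ is nonsingular and each $\mathbf{J}_i$ is a Jordan block of size $m_i\times m_i$ with eigenvalue $\lambda_i$, $\sum_i m_i=n$. Then: (i) The matrix Laplace transform $\boldsymbol{\mathcal{L}}_X(\mathbf{S})$ exists if and only if $$\mathbb{E}\left[(-X)^{j-1}e^{-\lambda_i X}\right]\in\mathbb{C}\quad\text{for all } j\in\{1,\dots,m_i\},\ i\in\{1,\dots,k\}$$ (i.e. $\boldsymbol{\mathcal{L}}_X$ is convergent on the spectra of $\mathbf{S}$). In that case $$\boldsymbol{\mathcal{L}}_X(\mathbf{S})=\mathbf{P}\,\mathrm{blkdiag}\big(\boldsymbol{\mathcal{L}}_X(\mathbf{J}_i)\big)_{i=1}^k\,\mathbf{P}^{-1},$$ where each $\boldsymbol{\mathcal{L}}_X(\mathbf{J}_i)$ is the upper triangular Toeplitz matrix whose first row has entries $\boldsymbol{\mathcal{L}}_X(\mathbf{J}_i)_{1,j}=\frac{1}{(j-1)!}\mathbb{E}\left[(-X)^{j-1}e^{-\lambda_iX}\right]$, $j\in\{1,\dots,m_i\}$. (ii) Assume further that $X$ takes values only in $\mathbb{R}_+$, that all eigenvalues of $\mathbf{S}$ lie in the region of convergence of the scalar Laplace transform $\mathcal{L}_X(s)=\mathbb{E}[e^{-sX}]$,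 and that all eigenvalues corresponding to Jordan blocks of size larger than $1$ lie in the interior of this region of convergence. Then $\mathcal{L}_X$ is defined on the spectrum of $\mathbf{S}$, and $\boldsymbol{\mathcal{L}}_X(\mathbf{S})$ equals the matrix function $\boldsymbol{f}(\mathbf{S})$ corresponding to $f=\mathcal{L}_X$.
   Context: For a random variable $X$ and deterministic $\mathbf{S}\in\mathbb{C}^{n\times n}$, the matrix Laplace transform is $\boldsymbol{\mathcal{L}}_X(\mathbf{S})=\mathbb{E}[\exp(-\mathbf{S}X)]$ (expectation taken entrywise, $\exp$ the matrix exponential); it is said to exist if each entry is a well-defined finite complex number. The region of convergence of $\mathcal{L}_X$ is the set of $s\in\mathbb{C}$ for which $\mathbb{E}[e^{-sX}]$ converges. Matrix function: for $f:\mathbb{C}\to\mathbb{C}$ and $\mathbf{S}$ with distinct eigenvalues $\lambda_1,\dots,\lambda_p$ whose largest Jordan blocks have sizes $n_1,\dots,n_p$, $f$ is defined on the spectrum of $\mathbf{S}$ if $f^{(j)}(\lambda_m)$ exists for all $j\in\{0,\dots,n_m-1\}$ and all $m$; then $\boldsymbol{f}(\mathbf{S})=\mathbf{P}\,\mathrm{blkdiag}(\boldsymbol{f}(\mathbf{J}_i))_{i}\,\mathbf{P}^{-1}$ where $\boldsymbol{f}(\mathbf{J}_i)$ is upper triangular Toeplitz with first row $\big(f(\lambda_i), f^{(1)}(\lambda_i), \tfrac{1}{2!}f^{(2)}(\lambda_i),\dots,\tfrac{1}{(m_i-1)!}f^{(m_i-1)}(\lambda_i)\big)$. *)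

theory Defs
  imports "HOL-Probability.Probability" "Jordan_Normal_Form.Jordan_Normal_Form"
begin

definition mexp :: "complex mat \<Rightarrow> complex mat" where
  "mexp A = mat (dim_row A) (dim_col A)
     (\<lambda>(i,j). \<Sum>k. (A ^\<^sub>m k) $$ (i,j) / of_nat (fact k))"

definition mlaplace_exists :: "'w measure \<Rightarrow> ('w \<Rightarrow> complex) \<Rightarrow> complex mat \<Rightarrow> bool" where
  "mlaplace_exists M X S =
     (\<forall>i < dim_row S. \<forall>j < dim_col S.
        integrable M (\<lambda>\<omega>. mexp ((- X \<omega>) \<cdot>\<^sub>m S) $$ (i,j)))"

definition mlaplace :: "'w measure \<Rightarrow> ('w \<Rightarrow> complex) \<Rightarrow> complex mat \<Rightarrow> complex mat" where
  "mlaplace M X S = mat (dim_row S) (dim_col S)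
     (\<lambda>(i,j). LINT \<omega>|M. mexp ((- X \<omega>) \<cdot>\<^sub>m S) $$ (i,j))"

definition laplace :: "'w measure \<Rightarrow> ('w \<Rightarrow> complex) \<Rightarrow> complex \<Rightarrow> complex" where
  "laplace M X s = (LINT \<omega>|M. exp (- s * X \<omega>))"

definition laplace_roc :: "'w measure \<Rightarrow> ('w \<Rightarrow> complex) \<Rightarrow> complex set" where
  "laplace_roc M X = {s. integrable M (\<lambda>\<omega>. exp (- s * X \<omega>))}"

definition laplace_block :: "'w measure \<Rightarrow> ('w \<Rightarrow> complex) \<Rightarrow> nat \<Rightarrow> complex \<Rightarrow> complex mat" where
  "laplace_block M X m l = mat m m (\<lambda>(r,c).
     if r \<le> c then (LINT \<omega>|M. (- X \<omega>) ^ (c - r) * exp (- l * X \<omega>)) / of_nat (fact (c - r))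
     else 0)"

text \<open>Jordan decomposition S = P * blkdiag(J_i) * P^-1, with Q = P^-1; blocks given as
  (size, eigenvalue) pairs with positive sizes.\<close>
definition jordan_decomp :: "complex mat \<Rightarrow> complex mat \<Rightarrow> (nat \<times> complex) list \<Rightarrow> complex mat \<Rightarrow> bool" where
  "jordan_decomp S P bs Q =
     (let n = dim_row S in
       S \<in> carrier_mat n n \<and> P \<in> carrier_mat n n \<and> Q \<in> carrier_mat n n \<and>
       P * Q = 1\<^sub>m n \<and> Q * P = 1\<^sub>m n \<and>
       (\<forall>(m,l) \<in> set bs. 0 < m) \<and> sum_list (map fst bs) = n \<and>
       S = P * jordan_matrix bs * Q)"

text \<open>f is defined on the spectrum of S: for every eigenvalue l with a Jordan block of
  size m, the derivatives f^(j)(l), j = 0..m-1, exist (complex derivatives; the j-th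
  derivative requires the (j-1)-th one to exist near l and be differentiable at l).\<close>
definition defined_on_spectrum :: "(complex \<Rightarrow> complex) \<Rightarrow> complex mat \<Rightarrow> bool" where
  "defined_on_spectrum f S =
     (\<forall>P bs Q. jordan_decomp S P bs Q \<longrightarrow>
        (\<forall>(m,l) \<in> set bs. \<forall>i. Suc i < m \<longrightarrow>
           (deriv ^^ i) f field_differentiable at l \<and>
           (Suc (Suc i) < m \<longrightarrow> (\<forall>\<^sub>F w in nhds l. (deriv ^^ i) f field_differentiable at w))))"

definition fun_block :: "(complex \<Rightarrow> complex) \<Rightarrow> nat \<Rightarrow> complex \<Rightarrow> complex mat" where
  "fun_block f m l = mat m m (\<lambda>(r,c).
     if r \<le> c then (deriv ^^ (c - r)) f l / of_nat (fact (c - r)) else 0)"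

definition matrix_function :: "(complex \<Rightarrow> complex) \<Rightarrow> complex mat \<Rightarrow> complex mat" where
  "matrix_function f S =
     (let (P, bs, Q) = (SOME (P, bs, Q). jordan_decomp S P bs Q)
      in P * diag_block_mat (map (\<lambda>(m,l). fun_block f m l) bs) * Q)"

end

theory Submission imports Defs "Jordan_Normal_Form.Jordan_Normal_Form_Uniqueness"
begin

lemma dim_diag_map:
  assumes "\<forall>b\<in>set bs. F b \<in> carrier_mat (d b) (d b)"
  shows "dim_row (diag_block_mat (map F bs)) = sum_list (map d bs)"
        "dim_col (diag_block_mat (map F bs)) = sum_list (map d bs)"
  using assms by (induction bs) (auto simp: Let_def)

lemma diag_cons_entry:
  assumes "\<forall>b\<in>set (a#bs). F b \<in> carrier_mat (d b) (d b)"
    "i < sum_list (map d (a#bs))" "j < sum_list (map d (a#bs))"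
  shows "diag_block_mat (map F (a#bs)) $$ (i,j) = (if i < d a then if j < d a then F a $$ (i,j) else 0
      else if j < d a then 0 else diag_block_mat (map F bs) $$ (i - d a, j - d a))"
proof -
  have Fa: "F a \<in> carrier_mat (d a) (d a)" using assms by auto
  have "\<forall>b\<in>set bs. F b \<in> carrier_mat (d b) (d b)" using assms by auto
  note D = dim_diag_map[OF this]
  show ?thesis using assms(2,3) Fa D by (simp add: Let_def)
qed

lemma diag_block_entry:
  fixes bs :: "'b list" and d :: "'b \<Rightarrow> nat"
  assumes "i < sum_list (map d bs)" "j < sum_list (map d bs)"
  shows "(\<forall>F::'b \<Rightarrow> 'a::zero mat. (\<forall>b\<in>set bs. F b \<in> carrier_mat (d b) (d b)) \<longrightarrow> diag_block_mat (map F bs) $$ (i,j) = 0) \<or>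
         (\<exists>b\<in>set bs. \<exists>i'<d b. \<exists>j'<d b. \<forall>F::'b \<Rightarrow> 'a mat. (\<forall>b\<in>set bs. F b \<in> carrier_mat (d b) (d b)) \<longrightarrow> diag_block_mat (map F bs) $$ (i,j) = F b $$ (i',j'))"
  using assms
proof (induction bs arbitrary: i j)
  case Nil
  then show ?case by simp
next
  case (Cons a bs)
  note eq = diag_cons_entry[OF _ Cons.prems]
  show ?case
  proof (cases "i < d a \<and> j < d a")
    case True
    have "\<forall>F::'b \<Rightarrow> 'a mat. (\<forall>b\<in>set (a#bs). F b \<in> carrier_mat (d b) (d b)) \<longrightarrow> diag_block_mat (map F (a#bs)) $$ (i, j) = F a $$ (i,j)"
    proof (intro allI impI)
      fix F :: "'b \<Rightarrow> 'a mat"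
      assume h: "\<forall>b\<in>set (a#bs). F b \<in> carrier_mat (d b) (d b)"
      show "diag_block_mat (map F (a#bs)) $$ (i, j) = F a $$ (i,j)"
        by (subst eq[OF h]) (use True in simp)
    qed
    then show ?thesis using True by (intro disjI2) auto
  next
    case F: False
    show ?thesis
    proof (cases "d a \<le> i \<and> d a \<le> j")
      case True
      then have "i - d a < sum_list (map d bs)" "j - d a < sum_list (map d bs)"
        using Cons.prems by auto
      from Cons.IH[OF this] show ?thesis
      proof
        assume H: "\<forall>F::'b \<Rightarrow> 'a mat. (\<forall>b\<in>set bs. F b \<in> carrier_mat (d b) (d b)) \<longrightarrow> diag_block_mat (map F bs) $$ (i - d a, j - d a) = 0"
        have "\<forall>F::'b \<Rightarrow> 'a mat. (\<forall>b\<in>set (a#bs). F b \<in> carrier_mat (d b) (d b)) \<longrightarrow> diag_block_mat (map F (a#bs)) $$ (i, j) = 0"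
        proof (intro allI impI)
          fix F :: "'b \<Rightarrow> 'a mat"
          assume h: "\<forall>b\<in>set (a#bs). F b \<in> carrier_mat (d b) (d b)"
          then have "\<forall>b\<in>set bs. F b \<in> carrier_mat (d b) (d b)" by simp
          then have "diag_block_mat (map F bs) $$ (i - d a, j - d a) = 0" using H by blast
          then show "diag_block_mat (map F (a#bs)) $$ (i, j) = 0"
            by (subst eq[OF h]) (use True in simp)
        qed
        then show ?thesis by (rule disjI1)
      next
        assume "\<exists>b\<in>set bs. \<exists>i'<d b. \<exists>j'<d b. \<forall>F::'b \<Rightarrow> 'a mat. (\<forall>b\<in>set bs. F b \<in> carrier_mat (d b) (d b)) \<longrightarrow> diag_block_mat (map F bs) $$ (i - d a, j - d a) = F b $$ (i',j')"
        then obtain b i' j' where b: "b \<in> set bs" "i' < d b" "j' < d b" and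
          H: "\<forall>F::'b \<Rightarrow> 'a mat. (\<forall>b\<in>set bs. F b \<in> carrier_mat (d b) (d b)) \<longrightarrow> diag_block_mat (map F bs) $$ (i - d a, j - d a) = F b $$ (i',j')"
          by blast
        have "\<forall>F::'b \<Rightarrow> 'a mat. (\<forall>b\<in>set (a#bs). F b \<in> carrier_mat (d b) (d b)) \<longrightarrow> diag_block_mat (map F (a#bs)) $$ (i, j) = F b $$ (i',j')"
        proof (intro allI impI)
          fix F :: "'b \<Rightarrow> 'a mat"
          assume h: "\<forall>b\<in>set (a#bs). F b \<in> carrier_mat (d b) (d b)"
          then have "\<forall>b\<in>set bs. F b \<in> carrier_mat (d b) (d b)" by simp
          then have "diag_block_mat (map F bs) $$ (i - d a, j - d a) = F b $$ (i',j')" using H by blast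
          then show "diag_block_mat (map F (a#bs)) $$ (i, j) = F b $$ (i',j')"
            by (subst eq[OF h]) (use True in simp)
        qed
        moreover have "b \<in> set (a#bs)" using b by simp
        ultimately show ?thesis using b(2,3) by blast
      qed
    next
      case False
      have "\<forall>F::'b \<Rightarrow> 'a mat. (\<forall>b\<in>set (a#bs). F b \<in> carrier_mat (d b) (d b)) \<longrightarrow> diag_block_mat (map F (a#bs)) $$ (i, j) = 0"
      proof (intro allI impI)
        fix F :: "'b \<Rightarrow> 'a mat"
        assume h: "\<forall>b\<in>set (a#bs). F b \<in> carrier_mat (d b) (d b)"
        show "diag_block_mat (map F (a#bs)) $$ (i, j) = 0"
          by (subst eq[OF h]) (use F False in auto)
      qed
      then show ?thesis by (rule disjI1)
    qed
  qed
qed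

lemma diag_block_entry_surj:
  fixes bs :: "'b list" and d :: "'b \<Rightarrow> nat"
  assumes "b \<in> set bs" "i' < d b" "j' < d b"
  shows "\<exists>i < sum_list (map d bs). \<exists>j < sum_list (map d bs). \<forall>F::'b \<Rightarrow> 'a::zero mat. (\<forall>b\<in>set bs. F b \<in> carrier_mat (d b) (d b)) \<longrightarrow> diag_block_mat (map F bs) $$ (i,j) = F b $$ (i',j')"
  using assms
proof (induction bs)
  case Nil
  then show ?case by simp
next
  case (Cons a bs)
  show ?case
  proof (cases "b = a")
    case True
    have ij: "i' < sum_list (map d (a#bs))" "j' < sum_list (map d (a#bs))" using Cons.prems True by auto
    have "\<forall>F::'b \<Rightarrow> 'a mat. (\<forall>b\<in>set (a#bs). F b \<in> carrier_mat (d b) (d b)) \<longrightarrow> diag_block_mat (map F (a#bs)) $$ (i', j') = F b $$ (i',j')"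
    proof (intro allI impI)
      fix F :: "'b \<Rightarrow> 'a mat"
      assume h: "\<forall>b\<in>set (a#bs). F b \<in> carrier_mat (d b) (d b)"
      show "diag_block_mat (map F (a#bs)) $$ (i', j') = F b $$ (i',j')"
        by (subst diag_cons_entry[OF h ij]) (use Cons.prems True in simp)
    qed
    then show ?thesis using ij by blast
  next
    case False
    then have "b \<in> set bs" using Cons.prems by auto
    from Cons.IH[OF this Cons.prems(2,3)] obtain i j where ij: "i < sum_list (map d bs)" "j < sum_list (map d bs)"
      and H: "\<forall>F::'b \<Rightarrow> 'a mat. (\<forall>b\<in>set bs. F b \<in> carrier_mat (d b) (d b)) \<longrightarrow> diag_block_mat (map F bs) $$ (i,j) = F b $$ (i',j')"
      by blast
    have ij2: "i + d a < sum_list (map d (a#bs))" "j + d a < sum_list (map d (a#bs))" using ij by auto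
    have "\<forall>F::'b \<Rightarrow> 'a mat. (\<forall>b\<in>set (a#bs). F b \<in> carrier_mat (d b) (d b)) \<longrightarrow> diag_block_mat (map F (a#bs)) $$ (i + d a, j + d a) = F b $$ (i',j')"
    proof (intro allI impI)
      fix F :: "'b \<Rightarrow> 'a mat"
      assume h: "\<forall>b\<in>set (a#bs). F b \<in> carrier_mat (d b) (d b)"
      then have "\<forall>b\<in>set bs. F b \<in> carrier_mat (d b) (d b)" by simp
      then have "diag_block_mat (map F bs) $$ (i, j) = F b $$ (i',j')" using H by blast
      then show "diag_block_mat (map F (a#bs)) $$ (i + d a, j + d a) = F b $$ (i',j')"
        by (subst diag_cons_entry[OF h ij2]) simp
    qed
    then show ?thesis using ij2 by blast
  qed
qed

lemma exp_sums_complex: "(\<lambda>n. z^n / of_nat (fact n)) sums exp (z::complex)"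
proof -
  have "z^n /\<^sub>R fact n = z^n / of_nat (fact n)" for n
    by (simp add: scaleR_conv_of_real divide_inverse mult.commute)
  then show ?thesis using exp_converges[of z] by simp
qed

lemma jb_series:
  fixes c l :: complex
  assumes "i \<le> j"
  shows "(\<lambda>k. c^k * (of_nat (k choose (j - i)) * l^(k + i - j)) / of_nat (fact k))
           sums (c^(j-i) * exp (c*l) / of_nat (fact (j-i)))"
proof -
  define d where "d = j - i"
  have eqf: "(\<lambda>k. c^(k+d) * (of_nat ((k+d) choose d) * l^(k + d + i - j)) / of_nat (fact (k+d)))
      = (\<lambda>k. (c^d / of_nat (fact d)) * ((c*l)^k / of_nat (fact k)))"
  proof
    fix k
    have e1: "k + d + i - j = k" using assms d_def by simp
    have "fact d * fact (k + d - d) * ((k+d) choose d) = (fact (k+d) :: nat)"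
      by (rule binomial_fact_lemma) simp
    then have f: "(of_nat (fact (k+d)) :: complex) = of_nat (fact k) * of_nat (fact d) * of_nat ((k+d) choose d)"
      by (metis add_diff_cancel_right' mult.commute of_nat_mult)
    have nz: "(of_nat ((k+d) choose d) :: complex) \<noteq> 0" by simp
    have nz2: "(of_nat (fact k) :: complex) \<noteq> 0" "(of_nat (fact d) :: complex) \<noteq> 0" by simp_all
    show "c^(k+d) * (of_nat ((k+d) choose d) * l^(k + d + i - j)) / of_nat (fact (k+d))
      = (c^d / of_nat (fact d)) * ((c*l)^k / of_nat (fact k))"
      unfolding e1 f using nz nz2 by (simp add: field_simps power_add power_mult_distrib)
  qed
  have "(\<lambda>k. (c^d / of_nat (fact d)) * ((c*l)^k / of_nat (fact k))) sums ((c^d / of_nat (fact d)) * exp (c*l))"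
    by (rule sums_mult[OF exp_sums_complex])
  then have "(\<lambda>k. c^(k+d) * (of_nat ((k+d) choose d) * l^(k + d + i - j)) / of_nat (fact (k+d))) sums (c^d * exp (c*l) / of_nat (fact d))"
    unfolding eqf by (simp add: field_simps)
  then have "(\<lambda>k. (\<lambda>k. c^k * (of_nat (k choose d) * l^(k + i - j)) / of_nat (fact k)) (k + d)) sums (c^d * exp (c*l) / of_nat (fact d))"
    by (simp add: add.assoc)
  then show ?thesis unfolding d_def[symmetric]
    by (subst (asm) sums_zero_iff_shift) (auto simp: binomial_eq_0)
qed

lemma smult_pow_mat:
  fixes A :: "'a::comm_ring_1 mat"
  assumes "A \<in> carrier_mat n n"
  shows "(c \<cdot>\<^sub>m A) ^\<^sub>m k = (c ^ k) \<cdot>\<^sub>m (A ^\<^sub>m k)"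
proof (induction k)
  case 0
  then show ?case using assms by (intro eq_matI) auto
next
  case (Suc k)
  have "(c \<cdot>\<^sub>m A) ^\<^sub>m Suc k = (c ^ k \<cdot>\<^sub>m A ^\<^sub>m k) * (c \<cdot>\<^sub>m A)" using Suc by simp
  also have "\<dots> = c ^ Suc k \<cdot>\<^sub>m (A ^\<^sub>m k * A)"
    using assms by (intro eq_matI) (auto simp: scalar_prod_def sum_distrib_left mult_ac)
  finally show ?case by simp
qed

lemma triple_entry:
  fixes P B Q :: "'a::comm_semiring_0 mat"
  assumes "P \<in> carrier_mat n n" "B \<in> carrier_mat n n" "Q \<in> carrier_mat n n" "i < n" "j < n"
  shows "(P * B * Q) $$ (i,j) = (\<Sum>a<n. \<Sum>b<n. P $$ (i,a) * B $$ (a,b) * Q $$ (b,j))"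
proof -
  have "(P * B * Q) $$ (i,j) = (\<Sum>a<n. P $$ (i,a) * (\<Sum>b<n. B $$ (a,b) * Q $$ (b,j)))"
    using assms by (simp add: scalar_prod_def lessThan_atLeast0)
  also have "\<dots> = (\<Sum>a<n. \<Sum>b<n. P $$ (i,a) * B $$ (a,b) * Q $$ (b,j))"
    by (simp add: sum_distrib_left mult.assoc)
  finally show ?thesis .
qed

definition expblk :: "complex \<Rightarrow> nat \<Rightarrow> complex \<Rightarrow> complex mat" where
  "expblk x m l = mat m m (\<lambda>(r,c). if r \<le> c then (- x) ^ (c - r) * exp (- l * x) / of_nat (fact (c - r)) else 0)"

definition Tm :: "complex \<Rightarrow> (nat \<times> complex) list \<Rightarrow> complex mat" where
  "Tm x bs = diag_block_mat (map (\<lambda>(m,l). expblk x m l) bs)"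

lemma expblk_carrier: "(\<lambda>(m,l). expblk x m l) b \<in> carrier_mat (fst b) (fst b)"
  by (cases b) (simp add: expblk_def)

lemma jbpow_carrier: "(\<lambda>(m,l). jordan_block m l ^\<^sub>m k) b \<in> carrier_mat (fst b) (fst b)"
  by (cases b) simp

lemma Tm_entry_series:
  assumes "p < sum_list (map fst bs)" "q < sum_list (map fst bs)"
  shows "(\<lambda>k. (- x)^k * (jordan_matrix bs ^\<^sub>m k) $$ (p,q) / of_nat (fact k)) sums (Tm x bs $$ (p,q))"
proof -
  define F where "F k = (\<lambda>(m::nat,l::complex). jordan_block m l ^\<^sub>m k)" for k
  define G where "G = (\<lambda>(m::nat,l::complex). expblk x m l)"
  have Fc: "\<forall>b\<in>set bs. F k b \<in> carrier_mat (fst b) (fst b)" for k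
    unfolding F_def using jbpow_carrier by blast
  have Gc: "\<forall>b\<in>set bs. G b \<in> carrier_mat (fst b) (fst b)"
    unfolding G_def using expblk_carrier by blast
  have J: "jordan_matrix bs ^\<^sub>m k = diag_block_mat (map (F k) bs)" for k
    unfolding jordan_matrix_pow F_def ..
  have T: "Tm x bs = diag_block_mat (map G bs)" unfolding Tm_def G_def ..
  from diag_block_entry[OF assms, where 'a=complex] show ?thesis
  proof
    assume H: "\<forall>F::(nat \<times> complex) \<Rightarrow> complex mat. (\<forall>b\<in>set bs. F b \<in> carrier_mat (fst b) (fst b)) \<longrightarrow> diag_block_mat (map F bs) $$ (p,q) = 0"
    have "(jordan_matrix bs ^\<^sub>m k) $$ (p,q) = 0" for k using H Fc unfolding J by blast
    moreover have "Tm x bs $$ (p,q) = 0" using H Gc unfolding T by blast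
    ultimately show ?thesis by simp
  next
    assume "\<exists>b0\<in>set bs. \<exists>i'<fst b0. \<exists>j'<fst b0. \<forall>F::(nat \<times> complex) \<Rightarrow> complex mat. (\<forall>b\<in>set bs. F b \<in> carrier_mat (fst b) (fst b)) \<longrightarrow> diag_block_mat (map F bs) $$ (p,q) = F b0 $$ (i',j')"
    then obtain b0 i' j' where b0: "b0 \<in> set bs" "i' < fst b0" "j' < fst b0" and
      H: "\<forall>F::(nat \<times> complex) \<Rightarrow> complex mat. (\<forall>b\<in>set bs. F b \<in> carrier_mat (fst b) (fst b)) \<longrightarrow> diag_block_mat (map F bs) $$ (p,q) = F b0 $$ (i',j')"
      by blast
    obtain m l where ml: "b0 = (m,l)" by force
    have e1: "(jordan_matrix bs ^\<^sub>m k) $$ (p,q) = (if i' \<le> j' then of_nat (k choose (j' - i')) * l ^ (k + i' - j') else 0)" for k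
      using H Fc b0 unfolding J by (simp add: F_def ml jordan_block_pow)
    have e2: "Tm x bs $$ (p,q) = (if i' \<le> j' then (- x) ^ (j' - i') * exp (- l * x) / of_nat (fact (j' - i')) else 0)"
      using H Gc b0 unfolding T by (simp add: G_def ml expblk_def)
    show ?thesis
    proof (cases "i' \<le> j'")
      case True
      have "exp ((-x) * l) = exp (- l * x)" by (simp add: mult.commute)
      then show ?thesis unfolding e1 e2 using jb_series[OF True, of "-x" l] True by simp
    next
      case False
      then show ?thesis unfolding e1 e2 by simp
    qed
  qed
qed

lemma mexp_jordan:
  assumes P: "P \<in> carrier_mat n n" and Q: "Q \<in> carrier_mat n n"
    and PQ: "P * Q = 1\<^sub>m n" and QP: "Q * P = 1\<^sub>m n"
    and bs: "sum_list (map fst bs) = n" and S: "S = P * jordan_matrix bs * Q"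
  shows "mexp ((- x) \<cdot>\<^sub>m S) = P * Tm x bs * Q"
proof -
  define J where "J = jordan_matrix bs"
  have Jc: "J \<in> carrier_mat n n" using bs J_def by auto
  have Sc: "S \<in> carrier_mat n n" using S P Q Jc J_def by auto
  have Tc: "Tm x bs \<in> carrier_mat n n"
    using dim_diag_map[of bs "\<lambda>(m,l). expblk x m l" fst] expblk_carrier bs
    unfolding Tm_def carrier_mat_def by blast
  have wit: "similar_mat_wit S J P Q"
    unfolding similar_mat_wit_def Let_def using Sc Jc P Q PQ QP S J_def by auto
  have pow: "((- x) \<cdot>\<^sub>m S) ^\<^sub>m k = (- x)^k \<cdot>\<^sub>m (P * J ^\<^sub>m k * Q)" for k
    unfolding smult_pow_mat[OF Sc] similar_mat_wit_pow_id[OF wit] ..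
  have ent: "(((- x) \<cdot>\<^sub>m S) ^\<^sub>m k) $$ (i,j) / of_nat (fact k) =
     (\<Sum>a<n. \<Sum>b<n. P $$ (i,a) * ((- x)^k * (J ^\<^sub>m k) $$ (a,b) / of_nat (fact k)) * Q $$ (b,j))"
    if "i < n" "j < n" for i j k
  proof -
    have "(((- x) \<cdot>\<^sub>m S) ^\<^sub>m k) $$ (i,j) = (- x)^k * (P * J ^\<^sub>m k * Q) $$ (i,j)"
      unfolding pow using that P Q Jc by simp
    also have "\<dots> = (- x)^k * (\<Sum>a<n. \<Sum>b<n. P $$ (i,a) * (J ^\<^sub>m k) $$ (a,b) * Q $$ (b,j))"
      using triple_entry[OF P _ Q that, of "J ^\<^sub>m k"] Jc by simp
    finally show ?thesis
      by (simp add: sum_distrib_left sum_divide_distrib mult_ac)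
  qed
  have sums: "(\<lambda>k. (((- x) \<cdot>\<^sub>m S) ^\<^sub>m k) $$ (i,j) / of_nat (fact k)) sums (P * Tm x bs * Q) $$ (i,j)"
    if "i < n" "j < n" for i j
  proof -
    have "(\<lambda>k. \<Sum>a<n. \<Sum>b<n. P $$ (i,a) * ((- x)^k * (J ^\<^sub>m k) $$ (a,b) / of_nat (fact k)) * Q $$ (b,j))
        sums (\<Sum>a<n. \<Sum>b<n. P $$ (i,a) * Tm x bs $$ (a,b) * Q $$ (b,j))"
    proof (intro sums_sum sums_mult sums_mult2)
      fix a b assume "a \<in> {..<n}" "b \<in> {..<n}"
      then show "(\<lambda>k. (- x)^k * (J ^\<^sub>m k) $$ (a,b) / of_nat (fact k)) sums Tm x bs $$ (a,b)"
        using Tm_entry_series[of a bs b x] bs unfolding J_def by simp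
    qed
    then show ?thesis using ent[OF that] triple_entry[OF P Tc Q that] by simp
  qed
  show ?thesis
  proof (rule eq_matI)
    show "dim_row (mexp ((- x) \<cdot>\<^sub>m S)) = dim_row (P * Tm x bs * Q)" using Sc P unfolding mexp_def by simp
    show "dim_col (mexp ((- x) \<cdot>\<^sub>m S)) = dim_col (P * Tm x bs * Q)" using Sc Q unfolding mexp_def by simp
    fix i j assume ij: "i < dim_row (P * Tm x bs * Q)" "j < dim_col (P * Tm x bs * Q)"
    then have ij': "i < n" "j < n" using P Q by auto
    show "mexp ((- x) \<cdot>\<^sub>m S) $$ (i, j) = (P * Tm x bs * Q) $$ (i, j)"
      using sums[OF ij'] Sc ij' unfolding mexp_def by (simp add: sums_iff)
  qed
qed

lemma case_carrier:
  assumes "\<And>m l. G m l \<in> carrier_mat m m"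
  shows "\<forall>b\<in>set bs. (case b of (m,l) \<Rightarrow> G m l) \<in> carrier_mat (fst b) (fst b)"
  using assms by (auto split: prod.splits)

lemma diag_entry_cases:
  assumes "p < sum_list (map fst bs)" "q < sum_list (map fst bs)"
  shows "(\<forall>G::nat \<Rightarrow> complex \<Rightarrow> complex mat. (\<forall>m l. G m l \<in> carrier_mat m m) \<longrightarrow>
            diag_block_mat (map (\<lambda>(m,l). G m l) bs) $$ (p,q) = 0) \<or>
         (\<exists>m l r c. (m,l) \<in> set bs \<and> r < m \<and> c < m \<and>
            (\<forall>G::nat \<Rightarrow> complex \<Rightarrow> complex mat. (\<forall>m l. G m l \<in> carrier_mat m m) \<longrightarrow>
            diag_block_mat (map (\<lambda>(m,l). G m l) bs) $$ (p,q) = G m l $$ (r,c)))"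
proof -
  from diag_block_entry[OF assms, where 'a=complex] show ?thesis
  proof
    assume H: "\<forall>F::(nat \<times> complex) \<Rightarrow> complex mat. (\<forall>b\<in>set bs. F b \<in> carrier_mat (fst b) (fst b)) \<longrightarrow> diag_block_mat (map F bs) $$ (p,q) = 0"
    show ?thesis
    proof (rule disjI1, intro allI impI)
      fix G :: "nat \<Rightarrow> complex \<Rightarrow> complex mat" assume "\<forall>m l. G m l \<in> carrier_mat m m"
      then have "\<forall>b\<in>set bs. (\<lambda>(m,l). G m l) b \<in> carrier_mat (fst b) (fst b)"
        using case_carrier[of G bs] by blast
      then show "diag_block_mat (map (\<lambda>(m,l). G m l) bs) $$ (p,q) = 0" using H by blast
    qed
  next
    assume "\<exists>b0\<in>set bs. \<exists>i'<fst b0. \<exists>j'<fst b0. \<forall>F::(nat \<times> complex) \<Rightarrow> complex mat. (\<forall>b\<in>set bs. F b \<in> carrier_mat (fst b) (fst b)) \<longrightarrow> diag_block_mat (map F bs) $$ (p,q) = F b0 $$ (i',j')"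
    then obtain b0 i' j' where b0: "b0 \<in> set bs" "i' < fst b0" "j' < fst b0" and
      H: "\<forall>F::(nat \<times> complex) \<Rightarrow> complex mat. (\<forall>b\<in>set bs. F b \<in> carrier_mat (fst b) (fst b)) \<longrightarrow> diag_block_mat (map F bs) $$ (p,q) = F b0 $$ (i',j')"
      by blast
    obtain m l where ml: "b0 = (m,l)" by force
    have "\<forall>G::nat \<Rightarrow> complex \<Rightarrow> complex mat. (\<forall>m l. G m l \<in> carrier_mat m m) \<longrightarrow>
            diag_block_mat (map (\<lambda>(m,l). G m l) bs) $$ (p,q) = G m l $$ (i',j')"
    proof (intro allI impI)
      fix G :: "nat \<Rightarrow> complex \<Rightarrow> complex mat" assume "\<forall>m l. G m l \<in> carrier_mat m m"
      then have "\<forall>b\<in>set bs. (\<lambda>(m,l). G m l) b \<in> carrier_mat (fst b) (fst b)"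
        using case_carrier[of G bs] by blast
      then have "diag_block_mat (map (\<lambda>(m,l). G m l) bs) $$ (p,q) = (\<lambda>(m,l). G m l) b0 $$ (i',j')"
        using H by blast
      then show "diag_block_mat (map (\<lambda>(m,l). G m l) bs) $$ (p,q) = G m l $$ (i',j')" by (simp add: ml)
    qed
    moreover have "(m,l) \<in> set bs" "i' < m" "j' < m" using b0 ml by auto
    ultimately show ?thesis by blast
  qed
qed

lemma diag_entry_surj:
  assumes "(m,l) \<in> set bs" "r < m" "c < m"
  shows "\<exists>p < sum_list (map fst bs). \<exists>q < sum_list (map fst bs).
            (\<forall>G::nat \<Rightarrow> complex \<Rightarrow> complex mat. (\<forall>m l. G m l \<in> carrier_mat m m) \<longrightarrow>
            diag_block_mat (map (\<lambda>(m,l). G m l) bs) $$ (p,q) = G m l $$ (r,c))"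
proof -
  have a2: "r < fst (m,l)" "c < fst (m,l)" using assms by auto
  from diag_block_entry_surj[of "(m,l)" bs r fst c, where 'a=complex, OF assms(1) a2]
  obtain p q where pq: "p < sum_list (map fst bs)" "q < sum_list (map fst bs)" and
    H: "\<forall>F::(nat \<times> complex) \<Rightarrow> complex mat. (\<forall>b\<in>set bs. F b \<in> carrier_mat (fst b) (fst b)) \<longrightarrow> diag_block_mat (map F bs) $$ (p,q) = F (m,l) $$ (r,c)"
    by blast
  have "\<forall>G::nat \<Rightarrow> complex \<Rightarrow> complex mat. (\<forall>m l. G m l \<in> carrier_mat m m) \<longrightarrow>
            diag_block_mat (map (\<lambda>(m,l). G m l) bs) $$ (p,q) = G m l $$ (r,c)"
  proof (intro allI impI)
    fix G :: "nat \<Rightarrow> complex \<Rightarrow> complex mat" assume "\<forall>m l. G m l \<in> carrier_mat m m"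
    then have "\<forall>b\<in>set bs. (\<lambda>(m,l). G m l) b \<in> carrier_mat (fst b) (fst b)"
      using case_carrier[of G bs] by blast
    then have "diag_block_mat (map (\<lambda>(m,l). G m l) bs) $$ (p,q) = (\<lambda>(m,l). G m l) (m,l) $$ (r,c)"
      using H by blast
    then show "diag_block_mat (map (\<lambda>(m,l). G m l) bs) $$ (p,q) = G m l $$ (r,c)" by simp
  qed
  then show ?thesis using pq by blast
qed

lemma expblk_carrier2: "expblk x m l \<in> carrier_mat m m" by (simp add: expblk_def)

lemma laplace_block_carrier: "laplace_block M X m l \<in> carrier_mat m m" by (simp add: laplace_block_def)

lemma expblk_entry: "r < m \<Longrightarrow> c < m \<Longrightarrow> expblk x m l $$ (r,c) =
   (if r \<le> c then (- x) ^ (c - r) * exp (- l * x) / of_nat (fact (c - r)) else 0)"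
  by (simp add: expblk_def)

lemma Tm_carrier: "sum_list (map fst bs) = n \<Longrightarrow> Tm x bs \<in> carrier_mat n n"
  using dim_diag_map[of bs "\<lambda>(m,l). expblk x m l" fst] expblk_carrier
  unfolding Tm_def carrier_mat_def by blast

lemma Tm_integrable_iff:
  assumes bs: "sum_list (map fst bs) = n"
  shows "(\<forall>p<n. \<forall>q<n. integrable M (\<lambda>\<omega>. Tm (X \<omega>) bs $$ (p,q))) \<longleftrightarrow>
         (\<forall>(m,l) \<in> set bs. \<forall>j \<in> {1..m}. integrable M (\<lambda>\<omega>. (- X \<omega>) ^ (j - 1) * exp (- l * X \<omega>)))"
proof
  assume H: "\<forall>p<n. \<forall>q<n. integrable M (\<lambda>\<omega>. Tm (X \<omega>) bs $$ (p,q))"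
  show "\<forall>(m,l) \<in> set bs. \<forall>j \<in> {1..m}. integrable M (\<lambda>\<omega>. (- X \<omega>) ^ (j - 1) * exp (- l * X \<omega>))"
  proof (clarify)
    fix m l j assume ml: "(m,l) \<in> set bs" and j: "j \<in> {1..m}"
    then have "0 < m" "j - 1 < m" by auto
    from diag_entry_surj[OF ml this] obtain p q where pq: "p < n" "q < n" and
      G: "\<forall>G::nat \<Rightarrow> complex \<Rightarrow> complex mat. (\<forall>m l. G m l \<in> carrier_mat m m) \<longrightarrow>
            diag_block_mat (map (\<lambda>(m,l). G m l) bs) $$ (p,q) = G m l $$ (0,j-1)"
      using bs by blast
    have "Tm x bs $$ (p,q) = (- x) ^ (j - 1) * exp (- l * x) / of_nat (fact (j - 1))" for x
    proof -
      have "Tm x bs $$ (p,q) = expblk x m l $$ (0, j - 1)"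
        unfolding Tm_def using G expblk_carrier2[of x] by blast
      also have "\<dots> = (- x) ^ (j - 1) * exp (- l * x) / of_nat (fact (j - 1))"
        using \<open>0 < m\<close> \<open>j - 1 < m\<close> by (simp add: expblk_entry)
      finally show ?thesis .
    qed
    then have "(\<lambda>\<omega>. Tm (X \<omega>) bs $$ (p,q)) = (\<lambda>\<omega>. (- X \<omega>) ^ (j - 1) * exp (- l * X \<omega>) / of_nat (fact (j - 1)))"
      by (intro ext)
    moreover have "integrable M (\<lambda>\<omega>. Tm (X \<omega>) bs $$ (p,q))" using H pq by blast
    ultimately have "integrable M (\<lambda>\<omega>. (- X \<omega>) ^ (j - 1) * exp (- l * X \<omega>) / of_nat (fact (j - 1)))"
      by simp
    then have "integrable M (\<lambda>\<omega>. of_nat (fact (j - 1)) * ((- X \<omega>) ^ (j - 1) * exp (- l * X \<omega>) / of_nat (fact (j - 1))))"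
      by (rule integrable_mult_right)
    then show "integrable M (\<lambda>\<omega>. (- X \<omega>) ^ (j - 1) * exp (- l * X \<omega>))"
      by simp
  qed
next
  assume H: "\<forall>(m,l) \<in> set bs. \<forall>j \<in> {1..m}. integrable M (\<lambda>\<omega>. (- X \<omega>) ^ (j - 1) * exp (- l * X \<omega>))"
  show "\<forall>p<n. \<forall>q<n. integrable M (\<lambda>\<omega>. Tm (X \<omega>) bs $$ (p,q))"
  proof (intro allI impI)
    fix p q assume pq: "p < n" "q < n"
    have pq': "p < sum_list (map fst bs)" "q < sum_list (map fst bs)" using pq bs by auto
    from diag_entry_cases[OF pq'] show "integrable M (\<lambda>\<omega>. Tm (X \<omega>) bs $$ (p,q))"
    proof (elim disjE exE conjE)
      assume G: "\<forall>G::nat \<Rightarrow> complex \<Rightarrow> complex mat. (\<forall>m l. G m l \<in> carrier_mat m m) \<longrightarrow>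
            diag_block_mat (map (\<lambda>(m,l). G m l) bs) $$ (p,q) = 0"
      have "Tm x bs $$ (p,q) = 0" for x
        unfolding Tm_def using G expblk_carrier2[of x] by blast
      then show ?thesis by simp
    next
      fix m l r c assume ml: "(m,l) \<in> set bs" and rc: "r < m" "c < m" and
        G: "\<forall>G::nat \<Rightarrow> complex \<Rightarrow> complex mat. (\<forall>m l. G m l \<in> carrier_mat m m) \<longrightarrow>
            diag_block_mat (map (\<lambda>(m,l). G m l) bs) $$ (p,q) = G m l $$ (r,c)"
      have e: "Tm x bs $$ (p,q) = (if r \<le> c then (- x) ^ (c - r) * exp (- l * x) / of_nat (fact (c - r)) else 0)" for x
      proof -
        have "Tm x bs $$ (p,q) = expblk x m l $$ (r, c)"
          unfolding Tm_def using G expblk_carrier2[of x] by blast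
        then show ?thesis using rc by (simp add: expblk_entry)
      qed
      show ?thesis
      proof (cases "r \<le> c")
        case True
        have "Suc (c - r) \<in> {1..m}" using rc by auto
        then have "integrable M (\<lambda>\<omega>. (- X \<omega>) ^ (Suc (c - r) - 1) * exp (- l * X \<omega>))"
          using H ml by blast
        then have "integrable M (\<lambda>\<omega>. (- X \<omega>) ^ (c - r) * exp (- l * X \<omega>) / of_nat (fact (c - r)))"
          by simp
        then show ?thesis unfolding e using True by simp
      next
        case False
        then show ?thesis unfolding e by simp
      qed
    qed
  qed
qed

lemma conj_back:
  fixes P Q T :: "complex mat"
  assumes P: "P \<in> carrier_mat n n" and Q: "Q \<in> carrier_mat n n" and T: "T \<in> carrier_mat n n"
    and QP: "Q * P = 1\<^sub>m n"
  shows "Q * (P * T * Q) * P = T"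
proof -
  have "Q * (P * T * Q) * P = (Q * P) * T * (Q * P)"
    using P Q T by (simp add: assoc_mult_mat[of _ n n _ n _ n])
  also have "\<dots> = T" using QP T by simp
  finally show ?thesis .
qed

lemma part_i:
  fixes M :: "'w measure" and X :: "'w \<Rightarrow> complex"
  assumes P: "P \<in> carrier_mat n n" and Q: "Q \<in> carrier_mat n n"
    and PQ: "P * Q = 1\<^sub>m n" and QP: "Q * P = 1\<^sub>m n"
    and bs: "sum_list (map fst bs) = n" and S: "S = P * jordan_matrix bs * Q"
  shows "mlaplace_exists M X S \<longleftrightarrow>
            (\<forall>(m,l) \<in> set bs. \<forall>j \<in> {1..m}. integrable M (\<lambda>\<omega>. (- X \<omega>) ^ (j - 1) * exp (- l * X \<omega>)))"
    and "mlaplace_exists M X S \<Longrightarrow>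
            mlaplace M X S = P * diag_block_mat (map (\<lambda>(m,l). laplace_block M X m l) bs) * Q"
proof -
  have Jc: "jordan_matrix bs \<in> carrier_mat n n" using bs by auto
  have Sc: "S \<in> carrier_mat n n" using S P Q Jc by auto
  have Tc: "Tm x bs \<in> carrier_mat n n" for x using Tm_carrier[OF bs] .
  have me: "mexp ((- X \<omega>) \<cdot>\<^sub>m S) = P * Tm (X \<omega>) bs * Q" for \<omega>
    by (rule mexp_jordan[OF P Q PQ QP bs S])
  have E1: "mlaplace_exists M X S \<longleftrightarrow> (\<forall>i<n. \<forall>j<n. integrable M (\<lambda>\<omega>. (P * Tm (X \<omega>) bs * Q) $$ (i,j)))"
    unfolding mlaplace_exists_def me using Sc by simp
  have E2: "(\<forall>i<n. \<forall>j<n. integrable M (\<lambda>\<omega>. (P * Tm (X \<omega>) bs * Q) $$ (i,j))) \<longleftrightarrow>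
            (\<forall>p<n. \<forall>q<n. integrable M (\<lambda>\<omega>. Tm (X \<omega>) bs $$ (p,q)))"
  proof
    assume H: "\<forall>i<n. \<forall>j<n. integrable M (\<lambda>\<omega>. (P * Tm (X \<omega>) bs * Q) $$ (i,j))"
    show "\<forall>p<n. \<forall>q<n. integrable M (\<lambda>\<omega>. Tm (X \<omega>) bs $$ (p,q))"
    proof (intro allI impI)
      fix p q assume pq: "p < n" "q < n"
      have eqT: "Tm (X \<omega>) bs $$ (p,q) = (\<Sum>a<n. \<Sum>b<n. Q $$ (p,a) * (P * Tm (X \<omega>) bs * Q) $$ (a,b) * P $$ (b,q))" for \<omega>
      proof -
        have "Tm (X \<omega>) bs $$ (p,q) = (Q * (P * Tm (X \<omega>) bs * Q) * P) $$ (p,q)"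
          using conj_back[OF P Q Tc QP] by simp
        also have "\<dots> = (\<Sum>a<n. \<Sum>b<n. Q $$ (p,a) * (P * Tm (X \<omega>) bs * Q) $$ (a,b) * P $$ (b,q))"
          by (rule triple_entry[OF Q _ P pq]) (use P Q Tc in auto)
        finally show ?thesis .
      qed
      have I: "integrable M (\<lambda>\<omega>. (P * Tm (X \<omega>) bs * Q) $$ (a,b))" if "a < n" "b < n" for a b
        using H that by blast
      have integ: "integrable M (\<lambda>\<omega>. \<Sum>a<n. \<Sum>b<n. Q $$ (p,a) * (P * Tm (X \<omega>) bs * Q) $$ (a,b) * P $$ (b,q))"
        by (intro Bochner_Integration.integrable_sum integrable_mult_left integrable_mult_right) (simp_all add: I)
      show "integrable M (\<lambda>\<omega>. Tm (X \<omega>) bs $$ (p,q))" unfolding eqT by (rule integ)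
    qed
  next
    assume H: "\<forall>p<n. \<forall>q<n. integrable M (\<lambda>\<omega>. Tm (X \<omega>) bs $$ (p,q))"
    show "\<forall>i<n. \<forall>j<n. integrable M (\<lambda>\<omega>. (P * Tm (X \<omega>) bs * Q) $$ (i,j))"
    proof (intro allI impI)
      fix i j assume ij: "i < n" "j < n"
      have "(P * Tm (X \<omega>) bs * Q) $$ (i,j) = (\<Sum>a<n. \<Sum>b<n. P $$ (i,a) * Tm (X \<omega>) bs $$ (a,b) * Q $$ (b,j))" for \<omega>
        by (rule triple_entry[OF P Tc Q ij])
      moreover have "integrable M (\<lambda>\<omega>. \<Sum>a<n. \<Sum>b<n. P $$ (i,a) * Tm (X \<omega>) bs $$ (a,b) * Q $$ (b,j))"
        using H by (intro Bochner_Integration.integrable_sum integrable_mult_left integrable_mult_right) auto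
      ultimately show "integrable M (\<lambda>\<omega>. (P * Tm (X \<omega>) bs * Q) $$ (i,j))" by simp
    qed
  qed
  show iff: "mlaplace_exists M X S \<longleftrightarrow>
            (\<forall>(m,l) \<in> set bs. \<forall>j \<in> {1..m}. integrable M (\<lambda>\<omega>. (- X \<omega>) ^ (j - 1) * exp (- l * X \<omega>)))"
    unfolding E1 E2 Tm_integrable_iff[OF bs] ..
  assume ex: "mlaplace_exists M X S"
  then have Tint: "\<forall>p<n. \<forall>q<n. integrable M (\<lambda>\<omega>. Tm (X \<omega>) bs $$ (p,q))"
    unfolding E1 E2 .
  define L where "L = mat n n (\<lambda>(a,b). LINT \<omega>|M. Tm (X \<omega>) bs $$ (a,b))"
  have Lc: "L \<in> carrier_mat n n" unfolding L_def by simp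
  have step1: "mlaplace M X S = P * L * Q"
  proof (rule eq_matI)
    show "dim_row (mlaplace M X S) = dim_row (P * L * Q)" using Sc P unfolding mlaplace_def by simp
    show "dim_col (mlaplace M X S) = dim_col (P * L * Q)" using Sc Q unfolding mlaplace_def by simp
    fix i j assume "i < dim_row (P * L * Q)" "j < dim_col (P * L * Q)"
    then have ij: "i < n" "j < n" using P Q by auto
    have "mlaplace M X S $$ (i,j) = (LINT \<omega>|M. (P * Tm (X \<omega>) bs * Q) $$ (i,j))"
      unfolding mlaplace_def me using Sc ij by simp
    also have "\<dots> = (LINT \<omega>|M. (\<Sum>a<n. \<Sum>b<n. P $$ (i,a) * Tm (X \<omega>) bs $$ (a,b) * Q $$ (b,j)))"
      using triple_entry[OF P Tc Q ij] by simp
    also have "\<dots> = (\<Sum>a<n. LINT \<omega>|M. (\<Sum>b<n. P $$ (i,a) * Tm (X \<omega>) bs $$ (a,b) * Q $$ (b,j)))"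
      by (rule Bochner_Integration.integral_sum) (use Tint in \<open>auto intro!: Bochner_Integration.integrable_sum integrable_mult_left integrable_mult_right\<close>)
    also have "\<dots> = (\<Sum>a<n. \<Sum>b<n. LINT \<omega>|M. (P $$ (i,a) * Tm (X \<omega>) bs $$ (a,b) * Q $$ (b,j)))"
      by (intro sum.cong refl Bochner_Integration.integral_sum) (use Tint in \<open>auto intro!: integrable_mult_left integrable_mult_right\<close>)
    also have "\<dots> = (\<Sum>a<n. \<Sum>b<n. P $$ (i,a) * L $$ (a,b) * Q $$ (b,j))"
      by (intro sum.cong refl) (simp add: L_def)
    also have "\<dots> = (P * L * Q) $$ (i,j)"
      by (rule triple_entry[OF P Lc Q ij, symmetric])
    finally show "mlaplace M X S $$ (i,j) = (P * L * Q) $$ (i,j)" .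
  qed
  have Dc: "diag_block_mat (map (\<lambda>(m,l). laplace_block M X m l) bs) \<in> carrier_mat n n"
    using dim_diag_map[of bs "\<lambda>(m,l). laplace_block M X m l" fst] case_carrier[of "laplace_block M X" bs]
      laplace_block_carrier bs unfolding carrier_mat_def by blast
  have step2: "L = diag_block_mat (map (\<lambda>(m,l). laplace_block M X m l) bs)"
  proof (rule eq_matI)
    show "dim_row L = dim_row (diag_block_mat (map (\<lambda>(m,l). laplace_block M X m l) bs))" using Lc Dc by simp
    show "dim_col L = dim_col (diag_block_mat (map (\<lambda>(m,l). laplace_block M X m l) bs))" using Lc Dc by simp
    fix p q assume "p < dim_row (diag_block_mat (map (\<lambda>(m,l). laplace_block M X m l) bs))"
      "q < dim_col (diag_block_mat (map (\<lambda>(m,l). laplace_block M X m l) bs))"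
    then have pq: "p < n" "q < n" using Dc by auto
    have pq': "p < sum_list (map fst bs)" "q < sum_list (map fst bs)" using pq bs by auto
    from diag_entry_cases[OF pq'] show "L $$ (p,q) = diag_block_mat (map (\<lambda>(m,l). laplace_block M X m l) bs) $$ (p,q)"
    proof (elim disjE exE conjE)
      assume G: "\<forall>G::nat \<Rightarrow> complex \<Rightarrow> complex mat. (\<forall>m l. G m l \<in> carrier_mat m m) \<longrightarrow>
            diag_block_mat (map (\<lambda>(m,l). G m l) bs) $$ (p,q) = 0"
      have "Tm x bs $$ (p,q) = 0" for x
        unfolding Tm_def using G expblk_carrier2[of x] by blast
      moreover have "diag_block_mat (map (\<lambda>(m,l). laplace_block M X m l) bs) $$ (p,q) = 0"
        using G laplace_block_carrier[of M X] by blast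
      ultimately show ?thesis unfolding L_def using pq by simp
    next
      fix m l r c assume ml: "(m,l) \<in> set bs" and rc: "r < m" "c < m" and
        G: "\<forall>G::nat \<Rightarrow> complex \<Rightarrow> complex mat. (\<forall>m l. G m l \<in> carrier_mat m m) \<longrightarrow>
            diag_block_mat (map (\<lambda>(m,l). G m l) bs) $$ (p,q) = G m l $$ (r,c)"
      have e: "Tm x bs $$ (p,q) = (if r \<le> c then (- x) ^ (c - r) * exp (- l * x) / of_nat (fact (c - r)) else 0)" for x
      proof -
        have "Tm x bs $$ (p,q) = expblk x m l $$ (r, c)"
          unfolding Tm_def using G expblk_carrier2[of x] by blast
        then show ?thesis using rc by (simp add: expblk_entry)
      qed
      have e2: "diag_block_mat (map (\<lambda>(m,l). laplace_block M X m l) bs) $$ (p,q) = laplace_block M X m l $$ (r,c)"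
        using G laplace_block_carrier[of M X] by blast
      show ?thesis
        unfolding L_def e2 using pq rc by (simp add: e laplace_block_def)
    qed
  qed
  show "mlaplace M X S = P * diag_block_mat (map (\<lambda>(m,l). laplace_block M X m l) bs) * Q"
    using step1 step2 by simp
qed



lemma pow_le_fact_exp:
  fixes y :: real assumes "0 \<le> y" shows "y^k / fact k \<le> exp y"
proof -
  have "(\<Sum>n\<le>k. y^n / fact n) \<le> exp y"
    using summable_exp_generic[of y] assms
    by (auto simp: exp_def divide_inverse ac_simps intro!: sum_le_suminf)
  moreover have "y^k / fact k \<le> (\<Sum>n\<le>k. y^n / fact n)"
    using assms by (intro member_le_sum) auto
  ultimately show ?thesis by linarith
qed

lemma pow_le_exp:
  fixes t e :: real assumes t: "0 \<le> t" and e: "0 < e"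
  shows "t^k \<le> fact k / e^k * exp (e * t)"
proof -
  have "(e*t)^k / fact k \<le> exp (e*t)" using pow_le_fact_exp assms by simp
  then have "e^k * t^k \<le> fact k * exp (e*t)"
    by (simp add: power_mult_distrib divide_le_eq mult.commute)
  then show ?thesis using e by (simp add: field_simps)
qed

lemma exp_combine: "exp (a * t) * exp (- (b - a) * t) = exp (- (b - 2 * a) * (t::real))"
proof -
  have "a * t + (- (b - a) * t) = - (b - 2 * a) * t" by (simp add: algebra_simps)
  then show ?thesis by (metis exp_add)
qed

lemma ptA:
  fixes t d :: real and s s' :: complex
  assumes t: "0 \<le> t" and d: "0 < d" and ns: "norm (s' - s) \<le> d/2"
  shows "norm ((- of_real t)^k * exp (- s' * of_real t)) \<le> (fact k / (d/2)^k) * exp (- (Re s - d) * t)"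
proof -
  have re: "Re s - d/2 \<le> Re s'" using abs_Re_le_cmod[of "s' - s"] ns by auto
  have "(Re s - d/2) * t \<le> Re s' * t" by (rule mult_right_mono[OF re t])
  then have re2: "- Re s' * t \<le> - (Re s - d/2) * t" by (simp add: algebra_simps)
  have "norm ((- of_real t)^k * exp (- s' * of_real t)) = t^k * exp (- Re s' * t)"
    using t by (simp add: norm_mult norm_power norm_exp_eq_Re)
  also have "\<dots> \<le> t^k * exp (- (Re s - d/2) * t)"
    using re2 t by (intro mult_left_mono) auto
  also have "\<dots> \<le> (fact k / (d/2)^k * exp ((d/2) * t)) * exp (- (Re s - d/2) * t)"
    using pow_le_exp[OF t, of "d/2" k] d by (intro mult_right_mono) auto
  also have "\<dots> = (fact k / (d/2)^k) * exp (- (Re s - d) * t)"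
    using exp_combine[of "d/2" t "Re s"] by (simp add: mult.assoc)
  finally show ?thesis .
qed

lemma taylor1: "norm (exp z - 1 - z) \<le> exp (norm z) * norm z ^ 2" for z :: complex
proof -
  have "(\<Sum>i\<le>(1::nat). z^i / fact i) = 1 + z" by (simp add: atMost_Suc)
  then show ?thesis using Taylor_exp_field[of z 1] by (simp add: diff_diff_eq power2_eq_square)
qed

lemma ptB:
  fixes t d :: real and s h :: complex
  assumes t: "0 \<le> t" and d: "0 < d" and nh: "norm h \<le> d/2"
  shows "norm ((- of_real t)^k * exp (- (s + h) * of_real t) - (- of_real t)^k * exp (- s * of_real t)
             - h * ((- of_real t)^Suc k * exp (- s * of_real t)))
         \<le> norm h ^ 2 * ((fact (k+2) / (d/2)^(k+2)) * exp (- (Re s - d) * t))"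
proof -
  define z where "z = - (h * of_real t)"
  have e: "exp (- (s + h) * of_real t) = exp (- s * of_real t) * exp z"
  proof -
    have "- (s + h) * of_real t = - s * of_real t + z" by (simp add: z_def algebra_simps)
    then show ?thesis by (simp only: exp_add)
  qed
  have eq: "(- of_real t)^k * exp (- (s + h) * of_real t) - (- of_real t)^k * exp (- s * of_real t)
             - h * ((- of_real t)^Suc k * exp (- s * of_real t))
      = ((- of_real t)^k * exp (- s * of_real t)) * (exp z - 1 - z)"
    unfolding e by (simp add: z_def algebra_simps)
  have nz: "norm z = norm h * t" using t by (simp add: z_def norm_mult)
  have A: "norm ((- of_real t)^k * exp (- s * of_real t) :: complex) = t^k * exp (- Re s * t)"
    using t by (simp add: norm_mult norm_power norm_exp_eq_Re)
  have "norm z \<le> d/2 * t" using mult_right_mono[OF nh t] nz by simp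
  then have B: "exp (norm z) \<le> exp (d/2 * t)" by simp
  have C: "exp (norm z) * norm z ^ 2 \<le> exp (d/2 * t) * (norm h ^ 2 * t ^ 2)"
  proof -
    have "norm z ^ 2 = norm h^2 * t^2" by (simp add: nz power_mult_distrib)
    then show ?thesis using mult_right_mono[OF B, of "norm z ^ 2"] by simp
  qed
  have "norm (((- of_real t)^k * exp (- s * of_real t)) * (exp z - 1 - z))
      = t^k * exp (- Re s * t) * norm (exp z - 1 - z)" by (subst norm_mult, subst A, rule refl)
  also have "\<dots> \<le> t^k * exp (- Re s * t) * (exp (norm z) * norm z ^ 2)"
    using taylor1[of z] t by (intro mult_left_mono) auto
  also have "\<dots> \<le> t^k * exp (- Re s * t) * (exp (d/2 * t) * (norm h ^ 2 * t ^ 2))"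
    using C t by (intro mult_left_mono) auto
  also have "\<dots> = norm h ^ 2 * (t^(k+2) * (exp (d/2 * t) * exp (- Re s * t)))"
    by (simp add: power_add power2_eq_square algebra_simps)
  also have "exp (d/2 * t) * exp (- Re s * t) = exp (- (Re s - d/2) * t)"
    by (simp add: exp_add[symmetric] algebra_simps)
  also have "norm h ^ 2 * (t^(k+2) * exp (- (Re s - d/2) * t))
      \<le> norm h ^ 2 * ((fact (k+2) / (d/2)^(k+2) * exp ((d/2) * t)) * exp (- (Re s - d/2) * t))"
    using pow_le_exp[OF t, of "d/2" "k+2"] d by (intro mult_left_mono mult_right_mono) auto
  also have "\<dots> = norm h ^ 2 * ((fact (k+2) / (d/2)^(k+2)) * exp (- (Re s - d) * t))"
    using exp_combine[of "d/2" t "Re s"] by (simp add: mult.assoc)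
  finally show ?thesis unfolding eq .
qed

lemma X_real_obtain:
  assumes "\<forall>\<omega>\<in>space M. X \<omega> \<in> \<real> \<and> 0 \<le> Re (X \<omega>)" "\<omega> \<in> space M"
  shows "X \<omega> = complex_of_real (Re (X \<omega>))" "0 \<le> Re (X \<omega>)"
  using assms by (auto simp: complex_is_Real_iff complex_eq_iff)

lemma laplace_deriv:
  fixes M :: "'w measure" and X :: "'w \<Rightarrow> complex"
  assumes Xm: "X \<in> borel_measurable M" and Xnn: "\<forall>\<omega>\<in>space M. X \<omega> \<in> \<real> \<and> 0 \<le> Re (X \<omega>)"
    and s: "s \<in> interior (laplace_roc M X)"
  shows "(\<forall>k. integrable M (\<lambda>\<omega>. (- X \<omega>)^k * exp (- s * X \<omega>))) \<and>
         (\<forall>k. ((\<lambda>s. LINT \<omega>|M. (- X \<omega>)^k * exp (- s * X \<omega>)) has_field_derivative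
                (LINT \<omega>|M. (- X \<omega>)^Suc k * exp (- s * X \<omega>))) (at s))"
proof -
  obtain r where r: "r > 0" "ball s r \<subseteq> laplace_roc M X" using s mem_interior by blast
  define d where "d = r/2"
  have d: "0 < d" using r d_def by simp
  define s0 where "s0 = s - of_real d"
  have "s0 \<in> ball s r" using d r by (simp add: s0_def d_def dist_norm)
  then have g_int: "integrable M (\<lambda>\<omega>. exp (- s0 * X \<omega>))" using r unfolding laplace_roc_def by blast
  have ng: "norm (exp (- s0 * X \<omega>)) = exp (- (Re s - d) * Re (X \<omega>))" if "\<omega> \<in> space M" for \<omega>
  proof -
    define t where "t = Re (X \<omega>)"
    have Xt: "X \<omega> = of_real t" using X_real_obtain[OF Xnn that] t_def by simp
    show ?thesis unfolding Xt t_def[symmetric] by (simp add: norm_exp_eq_Re s0_def)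
  qed
  have meas: "(\<lambda>\<omega>. (- X \<omega>)^k * exp (- s' * X \<omega>)) \<in> borel_measurable M" for k s'
    using Xm by measurable
  have intA: "integrable M (\<lambda>\<omega>. (- X \<omega>)^k * exp (- s' * X \<omega>))" if ns: "norm (s' - s) \<le> d/2" for s' k
  proof (rule Bochner_Integration.integrable_bound[OF _ meas])
    show "integrable M (\<lambda>\<omega>. of_real (fact k / (d/2)^k) * exp (- s0 * X \<omega>))" using g_int by simp
    show "AE \<omega> in M. norm ((- X \<omega>)^k * exp (- s' * X \<omega>)) \<le> norm (of_real (fact k / (d/2)^k) * exp (- s0 * X \<omega>))"
    proof (rule AE_I2)
      fix \<omega> assume \<omega>: "\<omega> \<in> space M"
      define t where "t = Re (X \<omega>)"
      have Xt: "X \<omega> = of_real t" using X_real_obtain[OF Xnn \<omega>] t_def by simp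
      have t: "0 \<le> t" using X_real_obtain[OF Xnn \<omega>] t_def by simp
      have "norm ((- X \<omega>)^k * exp (- s' * X \<omega>)) \<le> (fact k / (d/2)^k) * exp (- (Re s - d) * t)"
        unfolding Xt by (rule ptA[OF t d ns])
      also have "\<dots> = norm (of_real (fact k / (d/2)^k) :: complex) * norm (exp (- s0 * X \<omega>))"
      proof -
        have "norm (of_real (fact k / (d/2)^k) :: complex) = fact k / (d/2)^k"
          by (subst norm_of_real) (use d in simp)
        then show ?thesis using ng[OF \<omega>] unfolding t_def by simp
      qed
      also have "\<dots> = norm (of_real (fact k / (d/2)^k) * exp (- s0 * X \<omega>))"
        by (rule norm_mult[symmetric])
      finally show "norm ((- X \<omega>)^k * exp (- s' * X \<omega>)) \<le> norm (of_real (fact k / (d/2)^k) * exp (- s0 * X \<omega>))" .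
    qed
  qed
  define F where "F k s' = (LINT \<omega>|M. (- X \<omega>)^k * exp (- s' * X \<omega>))" for k s'
  define K where "K k = (fact (k+2) / (d/2)^(k+2)) * (LINT \<omega>|M. norm (exp (- s0 * X \<omega>)))" for k
  have bnd: "norm (F k (s + h) - F k s - h * F (Suc k) s) \<le> norm h ^ 2 * K k" if nh: "norm h \<le> d/2" for h k
  proof -
    have i1: "integrable M (\<lambda>\<omega>. (- X \<omega>)^k * exp (- (s+h) * X \<omega>))" using intA[of "s+h"] nh by simp
    have i2: "integrable M (\<lambda>\<omega>. (- X \<omega>)^k * exp (- s * X \<omega>))" using intA[of s] d by simp
    have ss: "norm (s - s) \<le> d/2" using d by simp
    have i3: "integrable M (\<lambda>\<omega>. (- X \<omega>)^Suc k * exp (- s * X \<omega>))" by (rule intA[OF ss])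
    define D where "D \<omega> = (- X \<omega>)^k * exp (- (s+h) * X \<omega>) - (- X \<omega>)^k * exp (- s * X \<omega>)
        - h * ((- X \<omega>)^Suc k * exp (- s * X \<omega>))" for \<omega>
    have iD: "integrable M D" unfolding D_def using i1 i2 i3 by auto
    have "F k (s + h) - F k s - h * F (Suc k) s = (LINT \<omega>|M. D \<omega>)"
      unfolding F_def D_def using i1 i2 i3 by simp
    then have "norm (F k (s + h) - F k s - h * F (Suc k) s) \<le> (LINT \<omega>|M. norm (D \<omega>))"
      using Bochner_Integration.integral_norm_bound[of M D] by simp
    also have "\<dots> \<le> (LINT \<omega>|M. norm h ^ 2 * (fact (k+2) / (d/2)^(k+2)) * norm (exp (- s0 * X \<omega>)))"
    proof (rule Bochner_Integration.integral_mono)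
      show "integrable M (\<lambda>\<omega>. norm (D \<omega>))" using iD by simp
      show "integrable M (\<lambda>\<omega>. norm h ^ 2 * (fact (k+2) / (d/2)^(k+2)) * norm (exp (- s0 * X \<omega>)))"
        by (rule integrable_mult_right) (rule Bochner_Integration.integrable_norm[OF g_int])
      fix \<omega> assume \<omega>: "\<omega> \<in> space M"
      define t where "t = Re (X \<omega>)"
      have Xt: "X \<omega> = of_real t" using X_real_obtain[OF Xnn \<omega>] t_def by simp
      have t: "0 \<le> t" using X_real_obtain[OF Xnn \<omega>] t_def by simp
      have "norm (D \<omega>) \<le> norm h ^ 2 * ((fact (k+2) / (d/2)^(k+2)) * exp (- (Re s - d) * t))"
        unfolding D_def Xt by (rule ptB[OF t d nh])
      also have "\<dots> = norm h ^ 2 * (fact (k+2) / (d/2)^(k+2)) * norm (exp (- s0 * X \<omega>))"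
        using ng[OF \<omega>] unfolding t_def by simp
      finally show "norm (D \<omega>) \<le> norm h ^ 2 * (fact (k+2) / (d/2)^(k+2)) * norm (exp (- s0 * X \<omega>))" .
    qed
    also have "\<dots> = norm h ^ 2 * K k" unfolding K_def by (simp add: mult.assoc)
    finally show ?thesis .
  qed
  have deriv: "(F k has_field_derivative F (Suc k) s) (at s)" for k
    unfolding has_field_derivative_iff
  proof (rule LIM_zero_cancel, rule Lim_null_comparison[where g = "\<lambda>y. norm (y - s) * K k"])
    show "\<forall>\<^sub>F y in at s. norm ((F k y - F k s) / (y - s) - F (Suc k) s) \<le> norm (y - s) * K k"
      unfolding eventually_at
    proof (intro exI[of _ "d/2"] conjI ballI impI)
      show "0 < d/2" using d by simp
      fix y assume "y \<in> UNIV" and y: "y \<noteq> s \<and> dist y s < d/2"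
      define h where "h = y - s"
      have h0: "h \<noteq> 0" using y h_def by simp
      have nh: "norm h \<le> d/2" using y h_def by (simp add: dist_norm)
      have yh: "y = s + h" using h_def by simp
      have "(F k y - F k s) / (y - s) - F (Suc k) s = (F k (s + h) - F k s - h * F (Suc k) s) / h"
        unfolding yh using h0 by (simp add: field_simps)
      then have "norm ((F k y - F k s) / (y - s) - F (Suc k) s) = norm (F k (s + h) - F k s - h * F (Suc k) s) / norm h"
        by (simp add: norm_divide)
      also have "\<dots> \<le> norm h ^ 2 * K k / norm h"
        using bnd[OF nh, of k] h0 by (simp add: divide_right_mono)
      also have "\<dots> = norm (y - s) * K k" using h0 h_def by (simp add: power2_eq_square)
      finally show "norm ((F k y - F k s) / (y - s) - F (Suc k) s) \<le> norm (y - s) * K k" .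
    qed
    show "((\<lambda>y. norm (y - s) * K k) \<longlongrightarrow> 0) (at s)"
      by (auto intro!: tendsto_eq_intros)
  qed
  show ?thesis
  proof
    show "\<forall>k. integrable M (\<lambda>\<omega>. (- X \<omega>)^k * exp (- s * X \<omega>))" using intA[of s] d by simp
    show "\<forall>k. ((\<lambda>s. LINT \<omega>|M. (- X \<omega>)^k * exp (- s * X \<omega>)) has_field_derivative
                (LINT \<omega>|M. (- X \<omega>)^Suc k * exp (- s * X \<omega>))) (at s)"
      using deriv unfolding F_def by blast
  qed
qed

lemma deriv_funpow_laplace:
  fixes M :: "'w measure" and X :: "'w \<Rightarrow> complex"
  assumes Xm: "X \<in> borel_measurable M" and Xnn: "\<forall>\<omega>\<in>space M. X \<omega> \<in> \<real> \<and> 0 \<le> Re (X \<omega>)"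
  shows "\<forall>s \<in> interior (laplace_roc M X). (deriv ^^ k) (laplace M X) s = (LINT \<omega>|M. (- X \<omega>)^k * exp (- s * X \<omega>))"
proof (induction k)
  case 0
  then show ?case by (simp add: laplace_def)
next
  case (Suc k)
  show ?case
  proof
    fix s assume s: "s \<in> interior (laplace_roc M X)"
    have ev: "eventually (\<lambda>y. y \<in> interior (laplace_roc M X)) (nhds s)"
      by (rule eventually_nhds_in_open) (use s in auto)
    have ev2: "eventually (\<lambda>y. (deriv ^^ k) (laplace M X) y = (LINT \<omega>|M. (- X \<omega>)^k * exp (- y * X \<omega>))) (nhds s)"
      using ev Suc.IH by (auto elim: eventually_mono)
    have "(deriv ^^ Suc k) (laplace M X) s = deriv ((deriv ^^ k) (laplace M X)) s" by simp
    also have "\<dots> = deriv (\<lambda>y. LINT \<omega>|M. (- X \<omega>)^k * exp (- y * X \<omega>)) s"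
      by (rule deriv_cong_ev[OF ev2 refl])
    also have "\<dots> = (LINT \<omega>|M. (- X \<omega>)^Suc k * exp (- s * X \<omega>))"
      using laplace_deriv[OF Xm Xnn s] by (intro DERIV_imp_deriv) blast
    finally show "(deriv ^^ Suc k) (laplace M X) s = (LINT \<omega>|M. (- X \<omega>)^Suc k * exp (- s * X \<omega>))" .
  qed
qed

lemma diff_funpow_laplace:
  fixes M :: "'w measure" and X :: "'w \<Rightarrow> complex"
  assumes Xm: "X \<in> borel_measurable M" and Xnn: "\<forall>\<omega>\<in>space M. X \<omega> \<in> \<real> \<and> 0 \<le> Re (X \<omega>)"
    and s: "s \<in> interior (laplace_roc M X)"
  shows "(deriv ^^ i) (laplace M X) field_differentiable at s"
proof -
  have "((\<lambda>s. LINT \<omega>|M. (- X \<omega>)^i * exp (- s * X \<omega>)) has_field_derivative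
                (LINT \<omega>|M. (- X \<omega>)^Suc i * exp (- s * X \<omega>))) (at s)"
    using laplace_deriv[OF Xm Xnn s] by blast
  then have "((deriv ^^ i) (laplace M X) has_field_derivative
                (LINT \<omega>|M. (- X \<omega>)^Suc i * exp (- s * X \<omega>))) (at s)"
  proof (rule has_field_derivative_transform_within_open)
    show "open (interior (laplace_roc M X))" by simp
    show "s \<in> interior (laplace_roc M X)" by (rule s)
    fix x assume "x \<in> interior (laplace_roc M X)"
    then show "(LINT \<omega>|M. (- X \<omega>)^i * exp (- x * X \<omega>)) = (deriv ^^ i) (laplace M X) x"
      using deriv_funpow_laplace[OF Xm Xnn, of i] by simp
  qed
  then show ?thesis unfolding field_differentiable_def by blast
qed

theorem proposition1:
  fixes M :: "'w measure" and X :: "'w \<Rightarrow> complex" and S P Q :: "complex mat"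
    and bs :: "(nat \<times> complex) list" and n :: nat
  assumes "prob_space M"
    and "X \<in> borel_measurable M"
    and "S \<in> carrier_mat n n" and "P \<in> carrier_mat n n" and "Q \<in> carrier_mat n n"
    and "P * Q = 1\<^sub>m n" and "Q * P = 1\<^sub>m n"
    and "\<forall>(m,l) \<in> set bs. 0 < m"
    and "sum_list (map fst bs) = n"
    and "S = P * jordan_matrix bs * Q"
  shows "(mlaplace_exists M X S \<longleftrightarrow>
            (\<forall>(m,l) \<in> set bs. \<forall>j \<in> {1..m}.
               integrable M (\<lambda>\<omega>. (- X \<omega>) ^ (j - 1) * exp (- l * X \<omega>))))
       \<and> (mlaplace_exists M X S \<longrightarrow>
            mlaplace M X S = P * diag_block_mat (map (\<lambda>(m,l). laplace_block M X m l) bs) * Q)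
       \<and> ((\<forall>\<omega> \<in> space M. X \<omega> \<in> \<real> \<and> 0 \<le> Re (X \<omega>))
          \<and> (\<forall>(m,l) \<in> set bs. l \<in> laplace_roc M X \<and> (1 < m \<longrightarrow> l \<in> interior (laplace_roc M X)))
          \<longrightarrow> defined_on_spectrum (laplace M X) S \<and> mlaplace_exists M X S
              \<and> mlaplace M X S = matrix_function (laplace M X) S)"
proof -
  note P = assms(4) and Q = assms(5) and PQ = assms(6) and QP = assms(7) and bs = assms(9) and S = assms(10)
  have Sc: "S \<in> carrier_mat n n" by (rule assms(3))
  have dS: "dim_row S = n" using Sc by simp
  have i1: "mlaplace_exists M X S \<longleftrightarrow>
            (\<forall>(m,l) \<in> set bs. \<forall>j \<in> {1..m}. integrable M (\<lambda>\<omega>. (- X \<omega>) ^ (j - 1) * exp (- l * X \<omega>)))"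
    by (rule part_i(1)[OF P Q PQ QP bs S])
  have i2: "mlaplace_exists M X S \<longrightarrow>
            mlaplace M X S = P * diag_block_mat (map (\<lambda>(m,l). laplace_block M X m l) bs) * Q"
    using part_i(2)[OF P Q PQ QP bs S] by blast
  have jnf: "jordan_nf S bs"
    unfolding jordan_nf_def similar_mat_def
  proof
    show "0 \<notin> fst ` set bs" using assms(8) by auto
    show "\<exists>P Q. similar_mat_wit S (jordan_matrix bs) P Q"
      by (rule exI[of _ P], rule exI[of _ Q])
         (use Sc P Q PQ QP S bs in \<open>auto simp: similar_mat_wit_def Let_def\<close>)
  qed
  have jd_facts: "P' \<in> carrier_mat n n \<and> Q' \<in> carrier_mat n n \<and> P' * Q' = 1\<^sub>m n \<and> Q' * P' = 1\<^sub>m n \<and>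
       (\<forall>(m,l) \<in> set bs'. 0 < m) \<and> sum_list (map fst bs') = n \<and> S = P' * jordan_matrix bs' * Q' \<and>
       set bs' = set bs"
    if jd: "jordan_decomp S P' bs' Q'" for P' bs' Q'
  proof -
    have F: "P' \<in> carrier_mat n n" "Q' \<in> carrier_mat n n" "P' * Q' = 1\<^sub>m n" "Q' * P' = 1\<^sub>m n"
       "\<forall>(m,l) \<in> set bs'. 0 < m" "sum_list (map fst bs') = n" "S = P' * jordan_matrix bs' * Q'"
      using jd unfolding jordan_decomp_def Let_def dS by auto
    have jnf': "jordan_nf S bs'"
      unfolding jordan_nf_def similar_mat_def
    proof
      show "0 \<notin> fst ` set bs'" using F(5) by auto
      show "\<exists>P Q. similar_mat_wit S (jordan_matrix bs') P Q"
        by (rule exI[of _ P'], rule exI[of _ Q'])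
           (use Sc F in \<open>auto simp: similar_mat_wit_def Let_def\<close>)
    qed
    have "set bs' = set bs" using jordan_nf_unique[OF jnf' jnf] .
    with F show ?thesis by blast
  qed
  have ii: "(\<forall>\<omega> \<in> space M. X \<omega> \<in> \<real> \<and> 0 \<le> Re (X \<omega>))
          \<and> (\<forall>(m,l) \<in> set bs. l \<in> laplace_roc M X \<and> (1 < m \<longrightarrow> l \<in> interior (laplace_roc M X)))
          \<longrightarrow> defined_on_spectrum (laplace M X) S \<and> mlaplace_exists M X S
              \<and> mlaplace M X S = matrix_function (laplace M X) S"
  proof (intro impI)
    assume H: "(\<forall>\<omega> \<in> space M. X \<omega> \<in> \<real> \<and> 0 \<le> Re (X \<omega>))
          \<and> (\<forall>(m,l) \<in> set bs. l \<in> laplace_roc M X \<and> (1 < m \<longrightarrow> l \<in> interior (laplace_roc M X)))"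
    then have Xnn: "\<forall>\<omega> \<in> space M. X \<omega> \<in> \<real> \<and> 0 \<le> Re (X \<omega>)"
      and R: "\<forall>(m,l) \<in> set bs. l \<in> laplace_roc M X \<and> (1 < m \<longrightarrow> l \<in> interior (laplace_roc M X))"
      by auto
    note Xm = assms(2)
    have blk: "\<forall>(m,l) \<in> set bs. \<forall>j \<in> {1..m}. integrable M (\<lambda>\<omega>. (- X \<omega>) ^ (j - 1) * exp (- l * X \<omega>))"
    proof (clarify)
      fix m l j assume ml: "(m,l) \<in> set bs" and j: "j \<in> {1..m}"
      show "integrable M (\<lambda>\<omega>. (- X \<omega>) ^ (j - 1) * exp (- l * X \<omega>))"
      proof (cases "1 < m")
        case True
        then have "l \<in> interior (laplace_roc M X)" using R ml by auto
        then show ?thesis using laplace_deriv[OF Xm Xnn] by blast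
      next
        case False
        then have "j = 1" using j by auto
        moreover have "l \<in> laplace_roc M X" using R ml by auto
        ultimately show ?thesis unfolding laplace_roc_def by simp
      qed
    qed
    have ex: "mlaplace_exists M X S" using i1 blk by blast
    have key: "laplace_block M X m l = fun_block (laplace M X) m l" if ml: "(m,l) \<in> set bs" for m l
    proof (rule eq_matI)
      show "dim_row (laplace_block M X m l) = dim_row (fun_block (laplace M X) m l)"
        by (simp add: laplace_block_def fun_block_def)
      show "dim_col (laplace_block M X m l) = dim_col (fun_block (laplace M X) m l)"
        by (simp add: laplace_block_def fun_block_def)
      fix r c assume "r < dim_row (fun_block (laplace M X) m l)" "c < dim_col (fun_block (laplace M X) m l)"
      then have rc: "r < m" "c < m" by (simp_all add: fun_block_def)
      have "(LINT \<omega>|M. (- X \<omega>) ^ (c - r) * exp (- l * X \<omega>)) = (deriv ^^ (c - r)) (laplace M X) l"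
      proof (cases "1 < m")
        case True
        then have "l \<in> interior (laplace_roc M X)" using R ml by auto
        then show ?thesis using deriv_funpow_laplace[OF Xm Xnn, of "c - r"] by simp
      next
        case False
        then have "c - r = 0" using rc by auto
        then show ?thesis by (simp add: laplace_def)
      qed
      then show "laplace_block M X m l $$ (r, c) = fun_block (laplace M X) m l $$ (r, c)"
        using rc by (simp add: laplace_block_def fun_block_def)
    qed
    have dos: "defined_on_spectrum (laplace M X) S"
      unfolding defined_on_spectrum_def
    proof (intro allI impI ballI)
      fix P' bs' Q' b assume jd: "jordan_decomp S P' bs' Q'" and b: "b \<in> set bs'"
      obtain m l where bml: "b = (m,l)" by force
      have "(m,l) \<in> set bs" using jd_facts[OF jd] b bml by auto
      then have Rl: "1 < m \<longrightarrow> l \<in> interior (laplace_roc M X)" using R by auto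
      have "\<forall>i. Suc i < m \<longrightarrow>
           (deriv ^^ i) (laplace M X) field_differentiable at l \<and>
           (Suc (Suc i) < m \<longrightarrow> (\<forall>\<^sub>F w in nhds l. (deriv ^^ i) (laplace M X) field_differentiable at w))"
      proof (intro allI impI conjI)
        fix i assume "Suc i < m"
        then have lU: "l \<in> interior (laplace_roc M X)" using Rl by auto
        show "(deriv ^^ i) (laplace M X) field_differentiable at l"
          by (rule diff_funpow_laplace[OF Xm Xnn lU])
        have "eventually (\<lambda>y. y \<in> interior (laplace_roc M X)) (nhds l)"
          by (rule eventually_nhds_in_open) (use lU in auto)
        then show "\<forall>\<^sub>F w in nhds l. (deriv ^^ i) (laplace M X) field_differentiable at w"
          by (rule eventually_mono) (rule diff_funpow_laplace[OF Xm Xnn])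
      qed
      then show "case b of (m, l) \<Rightarrow> \<forall>i. Suc i < m \<longrightarrow>
           (deriv ^^ i) (laplace M X) field_differentiable at l \<and>
           (Suc (Suc i) < m \<longrightarrow> (\<forall>\<^sub>F w in nhds l. (deriv ^^ i) (laplace M X) field_differentiable at w))"
        using bml by simp
    qed
    have jd0: "jordan_decomp S P bs Q"
      unfolding jordan_decomp_def Let_def dS using Sc P Q PQ QP assms(8) bs S by auto
    have ex3: "\<exists>x. (\<lambda>(P, bs, Q). jordan_decomp S P bs Q) x"
      by (rule exI[of _ "(P, bs, Q)"]) (simp add: jd0)
    obtain P' bs' Q' where eq: "(SOME (P, bs, Q). jordan_decomp S P bs Q) = (P', bs', Q')"
      by (metis prod_cases3)
    have "(\<lambda>(P, bs, Q). jordan_decomp S P bs Q) (SOME (P, bs, Q). jordan_decomp S P bs Q)"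
      by (rule someI_ex[OF ex3])
    then have jd': "jordan_decomp S P' bs' Q'" unfolding eq by simp
    note F' = jd_facts[OF jd']
    have mf: "matrix_function (laplace M X) S = P' * diag_block_mat (map (\<lambda>(m,l). fun_block (laplace M X) m l) bs') * Q'"
      unfolding matrix_function_def eq by simp
    have ml': "mlaplace M X S = P' * diag_block_mat (map (\<lambda>(m,l). laplace_block M X m l) bs') * Q'"
      using part_i(2)[of P' n Q' bs' S M X] F' ex by blast
    have mapeq: "map (\<lambda>(m,l). laplace_block M X m l) bs' = map (\<lambda>(m,l). fun_block (laplace M X) m l) bs'"
    proof (rule map_cong[OF refl])
      fix b assume "b \<in> set bs'"
      then have "b \<in> set bs" using F' by blast
      moreover obtain m l where bml: "b = (m,l)" by force
      ultimately have "laplace_block M X m l = fun_block (laplace M X) m l" using key by blast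
      then show "(\<lambda>(m,l). laplace_block M X m l) b = (\<lambda>(m,l). fun_block (laplace M X) m l) b"
        using bml by simp
    qed
    have "mlaplace M X S = matrix_function (laplace M X) S" unfolding mf ml' mapeq by (rule refl)
    with dos ex show "defined_on_spectrum (laplace M X) S \<and> mlaplace_exists M X S
              \<and> mlaplace M X S = matrix_function (laplace M X) S" by blast
  qed
  show ?thesis using i1 i2 ii by blast
qed

end
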